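(* For every $n\geq 1$, the relation $\leq$ on $\mathcal{PP}(n)$ defined by: $P\leq Q$ if and only if for all $x,y\in P$, $\theta_{P,Q}(x)\leq_h\theta_{P,Q}(y)$ in $Q$ implies $x\leq_h y$ in $P$, is a partial order on $\mathcal{PP}(n)$.
   Context: A plane poset is a finite set $P$ with two partial orders $\leq_h$ and $\leq_r$ such that for all $x\neq y$ in $P$, $x$ and $y$ are comparable for $\leq_h$ if and only if they are not comparable for $\leq_r$. $\mathcal{PP}(n)$ is the set of isomorphism classes (bijections preserving both orders) of plane posets with $n$ elements. On any plane poset the relation $x\leq y$ iff ($x\leq_h y$ or $x\leq_r y$) is a total order (known fact). For $P,Q$ of the same cardinality, $\theta_{P,Q}:P\to Q$ is the unique bijection increasing for these total orders. *)

theory Defs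
  imports Main
begin

type_synonym pposet = "nat set \<times> nat rel \<times> nat rel"

definition pcar :: "pposet \<Rightarrow> nat set" where "pcar P = fst P"
definition ph :: "pposet \<Rightarrow> nat rel" where "ph P = fst (snd P)"
definition pr :: "pposet \<Rightarrow> nat rel" where "pr P = snd (snd P)"

definition plane_poset :: "pposet \<Rightarrow> bool" where
  "plane_poset P \<longleftrightarrow>
     finite (pcar P) \<and>
     ph P \<subseteq> pcar P \<times> pcar P \<and> pr P \<subseteq> pcar P \<times> pcar P \<and>
     partial_order_on (pcar P) (ph P) \<and> partial_order_on (pcar P) (pr P) \<and>
     (\<forall>x\<in>pcar P. \<forall>y\<in>pcar P. x \<noteq> y \<longrightarrow>
        (((x, y) \<in> ph P \<or> (y, x) \<in> ph P) \<longleftrightarrow> \<not> ((x, y) \<in> pr P \<or> (y, x) \<in> pr P)))"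

definition pp_iso :: "pposet \<Rightarrow> pposet \<Rightarrow> bool" where
  "pp_iso P Q \<longleftrightarrow> (\<exists>f. bij_betw f (pcar P) (pcar Q) \<and>
     (\<forall>x\<in>pcar P. \<forall>y\<in>pcar P.
        ((x, y) \<in> ph P \<longleftrightarrow> (f x, f y) \<in> ph Q) \<and>
        ((x, y) \<in> pr P \<longleftrightarrow> (f x, f y) \<in> pr Q)))"

definition ptot :: "pposet \<Rightarrow> nat rel" where
  "ptot P = ph P \<union> pr P"

text \<open>theta_{P,Q}: the unique bijection pcar P \<rightarrow> pcar Q increasing for the total orders
  (extended by undefined outside pcar P to make it unique as a HOL function).\<close>
definition theta :: "pposet \<Rightarrow> pposet \<Rightarrow> nat \<Rightarrow> nat" where
  "theta P Q = (THE f. bij_betw f (pcar P) (pcar Q) \<and>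
       (\<forall>x\<in>pcar P. \<forall>y\<in>pcar P. (x, y) \<in> ptot P \<longrightarrow> (f x, f y) \<in> ptot Q) \<and>
       (\<forall>x. x \<notin> pcar P \<longrightarrow> f x = undefined))"

definition pp_le :: "pposet \<Rightarrow> pposet \<Rightarrow> bool" where
  "pp_le P Q \<longleftrightarrow> (\<forall>x\<in>pcar P. \<forall>y\<in>pcar P.
      (theta P Q x, theta P Q y) \<in> ph Q \<longrightarrow> (x, y) \<in> ph P)"

definition PP :: "nat \<Rightarrow> pposet set set" where
  "PP n = {C. \<exists>P. plane_poset P \<and> card (pcar P) = n \<and>
                  C = {Q. plane_poset Q \<and> pp_iso P Q}}"

definition PP_le :: "nat \<Rightarrow> (pposet set) rel" where
  "PP_le n = {(C, D). C \<in> PP n \<and> D \<in> PP n \<and> (\<exists>P\<in>C. \<exists>Q\<in>D. pp_le P Q)}"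

end

theory Submission imports Defs begin

definition lin :: "nat set \<Rightarrow> nat rel \<Rightarrow> bool" where
  "lin A T \<longleftrightarrow> finite A \<and> T \<subseteq> A \<times> A \<and> (\<forall>x\<in>A. (x,x)\<in>T) \<and>
     (\<forall>x y. (x,y)\<in>T \<longrightarrow> (y,x)\<in>T \<longrightarrow> x = y) \<and>
     (\<forall>x y z. (x,y)\<in>T \<longrightarrow> (y,z)\<in>T \<longrightarrow> (x,z)\<in>T) \<and>
     (\<forall>x\<in>A. \<forall>y\<in>A. (x,y)\<in>T \<or> (y,x)\<in>T)"

lemma lin_tot: "lin A T \<Longrightarrow> x \<in> A \<Longrightarrow> y \<in> A \<Longrightarrow> (x,y) \<in> T \<or> (y,x) \<in> T"
  unfolding lin_def by blast

lemma lin_refl: "lin A T \<Longrightarrow> x \<in> A \<Longrightarrow> (x,x) \<in> T"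
  unfolding lin_def by blast

definition rk :: "nat set \<Rightarrow> nat rel \<Rightarrow> nat \<Rightarrow> nat" where
  "rk A T x = card {y\<in>A. (y,x)\<in>T \<and> y \<noteq> x}"

lemma rk_less:
  assumes "lin A T" "(x,y)\<in>T" "x \<noteq> y"
  shows "rk A T x < rk A T y"
proof -
  have fin: "finite A" and sub: "T \<subseteq> A \<times> A" using assms(1) by (auto simp: lin_def)
  have "{z\<in>A. (z,x)\<in>T \<and> z \<noteq> x} \<subset> {z\<in>A. (z,y)\<in>T \<and> z \<noteq> y}"
  proof
    show "{z\<in>A. (z,x)\<in>T \<and> z \<noteq> x} \<subseteq> {z\<in>A. (z,y)\<in>T \<and> z \<noteq> y}"
      using assms unfolding lin_def by blast
    have "x \<in> A" using assms sub by auto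
    then show "{z\<in>A. (z,x)\<in>T \<and> z \<noteq> x} \<noteq> {z\<in>A. (z,y)\<in>T \<and> z \<noteq> y}"
      using assms by auto
  qed
  then show ?thesis unfolding rk_def by (intro psubset_card_mono) (use fin in auto)
qed

lemma rk_inj:
  assumes "lin A T" shows "inj_on (rk A T) A"
proof (rule inj_onI)
  fix x y assume "x\<in>A" "y\<in>A" "rk A T x = rk A T y"
  then show "x = y" using rk_less[OF assms, of x y] rk_less[OF assms, of y x] assms
    unfolding lin_def by force
qed

lemma rk_bound:
  assumes "lin A T" "x \<in> A" shows "rk A T x < card A"
proof -
  have "{y\<in>A. (y,x)\<in>T \<and> y \<noteq> x} \<subset> A" using assms by auto
  then show ?thesis unfolding rk_def using assms(1) by (intro psubset_card_mono) (auto simp: lin_def)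
qed

lemma rk_bij:
  assumes "lin A T" shows "bij_betw (rk A T) A {..<card A}"
proof -
  have "rk A T ` A \<subseteq> {..<card A}" using rk_bound[OF assms] by auto
  moreover have "card (rk A T ` A) = card {..<card A}"
    using card_image[OF rk_inj[OF assms]] by simp
  ultimately have "rk A T ` A = {..<card A}" by (intro card_subset_eq) auto
  then show ?thesis using rk_inj[OF assms] by (simp add: bij_betw_def)
qed

definition mono_bij :: "nat set \<Rightarrow> nat rel \<Rightarrow> nat set \<Rightarrow> nat rel \<Rightarrow> (nat \<Rightarrow> nat) \<Rightarrow> bool" where
  "mono_bij A T B S f \<longleftrightarrow> bij_betw f A B \<and> (\<forall>x\<in>A. \<forall>y\<in>A. (x,y)\<in>T \<longrightarrow> (f x, f y)\<in>S)"

lemma mono_bij_rk: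
  assumes "lin A T" "lin B S" "mono_bij A T B S f" "x \<in> A"
  shows "rk B S (f x) = rk A T x"
proof -
  have bij: "bij_betw f A B" and mo: "\<forall>x\<in>A. \<forall>y\<in>A. (x,y)\<in>T \<longrightarrow> (f x, f y)\<in>S"
    using assms(3) by (auto simp: mono_bij_def)
  have inj: "inj_on f A" using bij by (simp add: bij_betw_def)
  have img: "f ` A = B" using bij by (simp add: bij_betw_def)
  have "{z\<in>B. (z, f x)\<in>S \<and> z \<noteq> f x} = f ` {y\<in>A. (y,x)\<in>T \<and> y \<noteq> x}"
  proof
    show "f ` {y\<in>A. (y,x)\<in>T \<and> y \<noteq> x} \<subseteq> {z\<in>B. (z, f x)\<in>S \<and> z \<noteq> f x}"
      using mo inj img assms(4) by (auto simp: inj_on_def)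
  next
    show "{z\<in>B. (z, f x)\<in>S \<and> z \<noteq> f x} \<subseteq> f ` {y\<in>A. (y,x)\<in>T \<and> y \<noteq> x}"
    proof
      fix z assume z: "z \<in> {z\<in>B. (z, f x)\<in>S \<and> z \<noteq> f x}"
      then obtain y where y: "y \<in> A" "z = f y" using img by auto
      have "(y,x) \<in> T"
      proof (rule ccontr)
        assume "(y,x) \<notin> T"
        then have "(x,y)\<in>T" using assms(1) y assms(4) unfolding lin_def by blast
        then have "(f x, f y) \<in> S" using mo y assms(4) by blast
        then show False using z y assms(2) unfolding lin_def by blast
      qed
      then show "z \<in> f ` {y\<in>A. (y,x)\<in>T \<and> y \<noteq> x}" using y z by auto
    qed
  qed
  moreover have "inj_on f {y\<in>A. (y,x)\<in>T \<and> y \<noteq> x}" using inj by (rule inj_on_subset) auto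
  ultimately show ?thesis unfolding rk_def by (simp add: card_image)
qed

lemma mono_bij_unique:
  assumes "lin A T" "lin B S" "mono_bij A T B S f" "mono_bij A T B S g" "x \<in> A"
  shows "f x = g x"
proof -
  have "f x \<in> B" "g x \<in> B" using assms(3,4,5) by (auto simp: mono_bij_def bij_betw_def)
  moreover have "rk B S (f x) = rk B S (g x)" using mono_bij_rk[OF assms(1,2,3,5)] mono_bij_rk[OF assms(1,2,4,5)] by simp
  ultimately show ?thesis using rk_inj[OF assms(2)] by (auto simp: inj_on_def)
qed

lemma mono_bij_exists:
  assumes "lin A T" "lin B S" "card A = card B"
  shows "mono_bij A T B S (\<lambda>x. inv_into B (rk B S) (rk A T x))"
proof -
  let ?h = "\<lambda>x. inv_into B (rk B S) (rk A T x)"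
  have bA: "bij_betw (rk A T) A {..<card A}" by (rule rk_bij[OF assms(1)])
  have bB: "bij_betw (inv_into B (rk B S)) {..<card A} B"
    using bij_betw_inv_into[OF rk_bij[OF assms(2)]] assms(3) by simp
  have bij: "bij_betw ?h A B" using bij_betw_trans[OF bA bB] by (simp add: comp_def)
  have rkh: "rk B S (?h x) = rk A T x" if "x \<in> A" for x
  proof -
    have "rk A T x \<in> {..<card B}" using bij_betw_apply[OF bA that] assms(3) by simp
    then show ?thesis by (rule bij_betw_inv_into_right[OF rk_bij[OF assms(2)]])
  qed
  have "(?h x, ?h y) \<in> S" if "x\<in>A" "y\<in>A" "(x,y)\<in>T" for x y
  proof (rule ccontr)
    assume nS: "(?h x, ?h y) \<notin> S"
    have "?h x \<in> B" "?h y \<in> B" using bij that by (auto simp: bij_betw_def)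
    then have "(?h y, ?h x) \<in> S" using nS lin_tot[OF assms(2)] by blast
    moreover have "?h y \<noteq> ?h x" using nS \<open>?h x \<in> B\<close> lin_refl[OF assms(2)] by metis
    ultimately have "rk B S (?h y) < rk B S (?h x)" by (intro rk_less[OF assms(2)])
    then have "rk A T y < rk A T x" using rkh that by simp
    moreover have "rk A T x \<le> rk A T y" using rk_less[OF assms(1) that(3)] by (cases "x = y") auto
    ultimately show False by simp
  qed
  then show ?thesis using bij by (simp add: mono_bij_def)
qed


lemma plane_facts:
  assumes "plane_poset P"
  shows "finite (pcar P)" "ph P \<subseteq> pcar P \<times> pcar P" "pr P \<subseteq> pcar P \<times> pcar P"
    "\<And>x. x \<in> pcar P \<Longrightarrow> (x,x) \<in> ph P" "\<And>x. x \<in> pcar P \<Longrightarrow> (x,x) \<in> pr P"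
    "\<And>x y z. (x,y)\<in>ph P \<Longrightarrow> (y,z)\<in>ph P \<Longrightarrow> (x,z)\<in>ph P"
    "\<And>x y z. (x,y)\<in>pr P \<Longrightarrow> (y,z)\<in>pr P \<Longrightarrow> (x,z)\<in>pr P"
    "\<And>x y. (x,y)\<in>ph P \<Longrightarrow> (y,x)\<in>ph P \<Longrightarrow> x = y"
    "\<And>x y. (x,y)\<in>pr P \<Longrightarrow> (y,x)\<in>pr P \<Longrightarrow> x = y"
    "\<And>x y. x\<in>pcar P \<Longrightarrow> y\<in>pcar P \<Longrightarrow> x \<noteq> y \<Longrightarrow>
        (((x, y) \<in> ph P \<or> (y, x) \<in> ph P) \<longleftrightarrow> \<not> ((x, y) \<in> pr P \<or> (y, x) \<in> pr P))"
proof -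
  have A: "finite (pcar P)" "ph P \<subseteq> pcar P \<times> pcar P" "pr P \<subseteq> pcar P \<times> pcar P"
    "partial_order_on (pcar P) (ph P)" "partial_order_on (pcar P) (pr P)"
    "\<forall>x\<in>pcar P. \<forall>y\<in>pcar P. x \<noteq> y \<longrightarrow>
        (((x, y) \<in> ph P \<or> (y, x) \<in> ph P) \<longleftrightarrow> \<not> ((x, y) \<in> pr P \<or> (y, x) \<in> pr P))"
    using assms unfolding plane_poset_def by simp_all
  note H = partial_order_onD[OF A(4)] and R = partial_order_onD[OF A(5)]
  show "finite (pcar P)" "ph P \<subseteq> pcar P \<times> pcar P" "pr P \<subseteq> pcar P \<times> pcar P" using A by simp_all
  show "\<And>x. x \<in> pcar P \<Longrightarrow> (x,x) \<in> ph P" using H(1) by (simp add: refl_on_def)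
  show "\<And>x. x \<in> pcar P \<Longrightarrow> (x,x) \<in> pr P" using R(1) by (simp add: refl_on_def)
  show "\<And>x y z. (x,y)\<in>ph P \<Longrightarrow> (y,z)\<in>ph P \<Longrightarrow> (x,z)\<in>ph P" using H(2) by (rule transD)
  show "\<And>x y z. (x,y)\<in>pr P \<Longrightarrow> (y,z)\<in>pr P \<Longrightarrow> (x,z)\<in>pr P" using R(2) by (rule transD)
  show "\<And>x y. (x,y)\<in>ph P \<Longrightarrow> (y,x)\<in>ph P \<Longrightarrow> x = y" using H(3) by (rule antisymD)
  show "\<And>x y. (x,y)\<in>pr P \<Longrightarrow> (y,x)\<in>pr P \<Longrightarrow> x = y" using R(3) by (rule antisymD)
  show "\<And>x y. x\<in>pcar P \<Longrightarrow> y\<in>pcar P \<Longrightarrow> x \<noteq> y \<Longrightarrow>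
        (((x, y) \<in> ph P \<or> (y, x) \<in> ph P) \<longleftrightarrow> \<not> ((x, y) \<in> pr P \<or> (y, x) \<in> pr P))"
    using A(6) by blast
qed

lemma ptot_lin:
  assumes "plane_poset P" shows "lin (pcar P) (ptot P)"
proof -
  note F = plane_facts[OF assms]
  have tr: "(x,z) \<in> ptot P" if xy: "(x,y)\<in>ptot P" and yz: "(y,z)\<in>ptot P" for x y z
  proof -
    have mem: "x \<in> pcar P" "y \<in> pcar P" "z \<in> pcar P" using xy yz F(2,3) unfolding ptot_def by auto
    show ?thesis
    proof (cases "x = z")
      case True then show ?thesis using F(4) mem unfolding ptot_def by auto
    next
      case xz: False
      show ?thesis
      proof (cases "(x,y)\<in>ph P")
        case hxy: True
        show ?thesis
        proof (cases "(y,z)\<in>ph P")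
          case True then show ?thesis using F(6) hxy unfolding ptot_def by blast
        next
          case False
          then have ryz: "(y,z)\<in>pr P" using yz unfolding ptot_def by auto
          show ?thesis
          proof (rule ccontr)
            assume nxz: "(x,z) \<notin> ptot P"
            then have "(z,x) \<in> ph P \<or> (z,x) \<in> pr P" using F(10)[OF mem(1,3) xz] unfolding ptot_def by blast
            then show False
            proof
              assume "(z,x) \<in> ph P"
              then have "(z,y) \<in> ph P" using F(6) hxy by blast
              then show False using F(10)[OF mem(2,3)] ryz False F(5) mem by (cases "y = z") auto
            next
              assume "(z,x) \<in> pr P"
              then have "(y,x) \<in> pr P" using F(7) ryz by blast
              then show False using F(10)[OF mem(1,2)] hxy nxz xy ryz unfolding ptot_def by (cases "x = y") auto
            qed
          qed
        qed
      next
        case nhxy: False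
        then have rxy: "(x,y)\<in>pr P" using xy unfolding ptot_def by auto
        show ?thesis
        proof (cases "(y,z)\<in>pr P")
          case True then show ?thesis using F(7) rxy unfolding ptot_def by blast
        next
          case False
          then have hyz: "(y,z)\<in>ph P" using yz unfolding ptot_def by auto
          show ?thesis
          proof (rule ccontr)
            assume nxz: "(x,z) \<notin> ptot P"
            then have "(z,x) \<in> ph P \<or> (z,x) \<in> pr P" using F(10)[OF mem(1,3) xz] unfolding ptot_def by blast
            then show False
            proof
              assume "(z,x) \<in> ph P"
              then have "(y,x) \<in> ph P" using F(6) hyz by blast
              then show False using F(10)[OF mem(1,2)] rxy nhxy by (cases "x = y") auto
            next
              assume "(z,x) \<in> pr P"
              then have "(z,y) \<in> pr P" using F(7) rxy by blast
              then show False using F(10)[OF mem(2,3)] hyz nxz yz rxy unfolding ptot_def by (cases "y = z") auto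
            qed
          qed
        qed
      qed
    qed
  qed
  have an: "x = y" if "(x,y)\<in>ptot P" "(y,x)\<in>ptot P" for x y
  proof -
    have mem: "x \<in> pcar P" "y \<in> pcar P" using that F(2,3) unfolding ptot_def by auto
    show ?thesis using that F(8,9) F(10)[OF mem] unfolding ptot_def by blast
  qed
  have to: "(x,y)\<in>ptot P \<or> (y,x)\<in>ptot P" if "x\<in>pcar P" "y\<in>pcar P" for x y
    using F(4) F(10)[OF that] that unfolding ptot_def by (cases "x = y") auto
  show ?thesis unfolding lin_def using F(1-5) tr an to unfolding ptot_def by blast
qed

lemma theta_mb:
  assumes "plane_poset P" "plane_poset Q" "card (pcar P) = card (pcar Q)"
  shows "mono_bij (pcar P) (ptot P) (pcar Q) (ptot Q) (theta P Q)"
proof -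
  let ?A = "pcar P" and ?B = "pcar Q"
  note LP = ptot_lin[OF assms(1)] and LQ = ptot_lin[OF assms(2)]
  define g where "g = (\<lambda>x. if x \<in> ?A then inv_into ?B (rk ?B (ptot Q)) (rk ?A (ptot P) x) else undefined)"
  have mh: "mono_bij ?A (ptot P) ?B (ptot Q) (\<lambda>x. inv_into ?B (rk ?B (ptot Q)) (rk ?A (ptot P) x))"
    by (rule mono_bij_exists[OF LP LQ assms(3)])
  have geq: "\<And>x. x \<in> ?A \<Longrightarrow> g x = inv_into ?B (rk ?B (ptot Q)) (rk ?A (ptot P) x)"
    unfolding g_def by simp
  have mg: "mono_bij ?A (ptot P) ?B (ptot Q) g"
  proof -
    have "bij_betw g ?A ?B"
      using bij_betw_cong[of ?A g "\<lambda>x. inv_into ?B (rk ?B (ptot Q)) (rk ?A (ptot P) x)" ?B] geq mh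
      unfolding mono_bij_def by simp
    moreover have "\<forall>x\<in>?A. \<forall>y\<in>?A. (x,y)\<in>ptot P \<longrightarrow> (g x, g y)\<in>ptot Q"
      using mh geq unfolding mono_bij_def by simp
    ultimately show ?thesis unfolding mono_bij_def by blast
  qed
  let ?Pr = "\<lambda>f. bij_betw f ?A ?B \<and>
       (\<forall>x\<in>?A. \<forall>y\<in>?A. (x, y) \<in> ptot P \<longrightarrow> (f x, f y) \<in> ptot Q) \<and>
       (\<forall>x. x \<notin> ?A \<longrightarrow> f x = undefined)"
  have pg: "?Pr g"
  proof (intro conjI)
    show "bij_betw g ?A ?B" "\<forall>x\<in>?A. \<forall>y\<in>?A. (x, y) \<in> ptot P \<longrightarrow> (g x, g y) \<in> ptot Q"
      using mg unfolding mono_bij_def by blast+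
    show "\<forall>x. x \<notin> ?A \<longrightarrow> g x = undefined" unfolding g_def by simp
  qed
  have "?Pr f \<Longrightarrow> f = g" for f
  proof (rule ext)
    fix x assume pf: "?Pr f"
    show "f x = g x"
    proof (cases "x \<in> ?A")
      case True
      have "mono_bij ?A (ptot P) ?B (ptot Q) f" using pf unfolding mono_bij_def by blast
      then show ?thesis by (rule mono_bij_unique[OF LP LQ _ mg True])
    next
      case False
      then have "f x = undefined" "g x = undefined" using pf unfolding g_def by auto
      then show ?thesis by simp
    qed
  qed
  then have "theta P Q = g" unfolding theta_def by (rule the_equality[where P="?Pr", OF pg])
  then show ?thesis using mg by simp
qed


lemma theta_eq:
  assumes "plane_poset P" "plane_poset Q" "card (pcar P) = card (pcar Q)"
    "mono_bij (pcar P) (ptot P) (pcar Q) (ptot Q) f" "x \<in> pcar P"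
  shows "theta P Q x = f x"
  using mono_bij_unique[OF ptot_lin[OF assms(1)] ptot_lin[OF assms(2)] theta_mb[OF assms(1-3)] assms(4,5)] .

lemma mb_comp:
  assumes "mono_bij A T B S f" "mono_bij B S C U g"
  shows "mono_bij A T C U (g \<circ> f)"
proof -
  have b1: "bij_betw f A B" and m1: "\<forall>x\<in>A. \<forall>y\<in>A. (x,y)\<in>T \<longrightarrow> (f x, f y)\<in>S"
    using assms(1) unfolding mono_bij_def by auto
  have b2: "bij_betw g B C" and m2: "\<forall>x\<in>B. \<forall>y\<in>B. (x,y)\<in>S \<longrightarrow> (g x, g y)\<in>U"
    using assms(2) unfolding mono_bij_def by auto
  have "bij_betw (g \<circ> f) A C" by (rule bij_betw_trans[OF b1 b2])
  moreover have "\<forall>x\<in>A. \<forall>y\<in>A. (x,y)\<in>T \<longrightarrow> ((g \<circ> f) x, (g \<circ> f) y)\<in>U"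
  proof (intro ballI impI)
    fix x y assume "x \<in> A" "y \<in> A" "(x,y) \<in> T"
    moreover then have "f x \<in> B" "f y \<in> B" using bij_betw_apply[OF b1] by auto
    ultimately show "((g \<circ> f) x, (g \<circ> f) y)\<in>U" using m1 m2 by simp
  qed
  ultimately show ?thesis unfolding mono_bij_def by blast
qed

lemma mb_id: "mono_bij A T A T id"
  by (simp add: mono_bij_def)

lemma mb_in: "mono_bij A T B S f \<Longrightarrow> x \<in> A \<Longrightarrow> f x \<in> B"
  by (auto simp: mono_bij_def bij_betw_def)

definition iso_by :: "(nat \<Rightarrow> nat) \<Rightarrow> pposet \<Rightarrow> pposet \<Rightarrow> bool" where
  "iso_by f P Q \<longleftrightarrow> bij_betw f (pcar P) (pcar Q) \<and>
     (\<forall>x\<in>pcar P. \<forall>y\<in>pcar P.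
        ((x, y) \<in> ph P \<longleftrightarrow> (f x, f y) \<in> ph Q) \<and>
        ((x, y) \<in> pr P \<longleftrightarrow> (f x, f y) \<in> pr Q))"

lemma pp_iso_by: "pp_iso P Q \<longleftrightarrow> (\<exists>f. iso_by f P Q)"
  unfolding pp_iso_def iso_by_def by blast

lemma iso_mb: "iso_by f P Q \<Longrightarrow> mono_bij (pcar P) (ptot P) (pcar Q) (ptot Q) f"
  unfolding iso_by_def mono_bij_def ptot_def by blast

lemma iso_refl: "pp_iso P P"
  unfolding pp_iso_def by (rule exI[of _ id]) auto

lemma iso_sym: assumes "pp_iso P Q" shows "pp_iso Q P"
proof -
  obtain f where f: "iso_by f P Q" using assms pp_iso_by by blast
  let ?g = "inv_into (pcar P) f"
  have b: "bij_betw f (pcar P) (pcar Q)" using f iso_by_def by blast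
  have bg: "bij_betw ?g (pcar Q) (pcar P)" by (rule bij_betw_inv_into[OF b])
  have "iso_by ?g Q P" unfolding iso_by_def
  proof (rule conjI[OF bg], intro ballI)
    fix x y assume x: "x \<in> pcar Q" and y: "y \<in> pcar Q"
    have gx: "?g x \<in> pcar P" "f (?g x) = x" using bg b x by (auto simp: bij_betw_def bij_betw_inv_into_right)
    have gy: "?g y \<in> pcar P" "f (?g y) = y" using bg b y by (auto simp: bij_betw_def bij_betw_inv_into_right)
    show "((x, y) \<in> ph Q \<longleftrightarrow> (?g x, ?g y) \<in> ph P) \<and> ((x, y) \<in> pr Q \<longleftrightarrow> (?g x, ?g y) \<in> pr P)"
      using f gx gy unfolding iso_by_def by metis
  qed
  then show ?thesis using pp_iso_by by blast
qed

lemma iso_trans: assumes "pp_iso P Q" "pp_iso Q R" shows "pp_iso P R"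
proof -
  obtain f where f: "iso_by f P Q" using assms pp_iso_by by blast
  obtain g where g: "iso_by g Q R" using assms pp_iso_by by blast
  have b1: "bij_betw f (pcar P) (pcar Q)" using f iso_by_def by blast
  have b2: "bij_betw g (pcar Q) (pcar R)" using g iso_by_def by blast
  have "iso_by (g \<circ> f) P R" unfolding iso_by_def
  proof (rule conjI[OF bij_betw_trans[OF b1 b2]], intro ballI)
    fix x y assume x: "x \<in> pcar P" and y: "y \<in> pcar P"
    have "f x \<in> pcar Q" "f y \<in> pcar Q" using bij_betw_apply[OF b1] x y by auto
    then show "((x, y) \<in> ph P \<longleftrightarrow> ((g \<circ> f) x, (g \<circ> f) y) \<in> ph R) \<and>
        ((x, y) \<in> pr P \<longleftrightarrow> ((g \<circ> f) x, (g \<circ> f) y) \<in> pr R)"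
      using f g x y unfolding iso_by_def comp_def by blast
  qed
  then show ?thesis using pp_iso_by by blast
qed

definition cls :: "pposet \<Rightarrow> pposet set" where
  "cls P = {Q. plane_poset Q \<and> pp_iso P Q}"

lemma cls_eq: "pp_iso P Q \<Longrightarrow> cls P = cls Q"
  unfolding cls_def using iso_sym iso_trans by blast

lemma iso_card: "pp_iso P Q \<Longrightarrow> card (pcar P) = card (pcar Q)"
  unfolding pp_iso_def using bij_betw_same_card by blast

lemma PP_mem:
  assumes "C \<in> PP n" "P \<in> C"
  shows "plane_poset P" "card (pcar P) = n" "C = cls P"
proof -
  obtain P0 where P0: "plane_poset P0" "card (pcar P0) = n" "C = cls P0"
    using assms(1) unfolding PP_def cls_def by blast
  have i: "pp_iso P0 P" using assms(2) P0 unfolding cls_def by blast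
  show "plane_poset P" using assms(2) P0 unfolding cls_def by blast
  show "card (pcar P) = n" using iso_card[OF i] P0 by simp
  show "C = cls P" using cls_eq[OF i] P0 by simp
qed

lemma PP_ne: "C \<in> PP n \<Longrightarrow> \<exists>P. P \<in> C"
  unfolding PP_def using iso_refl by blast

lemma iso_byD:
  assumes "iso_by f P Q"
  shows "bij_betw f (pcar P) (pcar Q)"
    "\<And>x y. x \<in> pcar P \<Longrightarrow> y \<in> pcar P \<Longrightarrow> (x, y) \<in> ph P \<longleftrightarrow> (f x, f y) \<in> ph Q"
    "\<And>x y. x \<in> pcar P \<Longrightarrow> y \<in> pcar P \<Longrightarrow> (x, y) \<in> pr P \<longleftrightarrow> (f x, f y) \<in> pr Q"
  using assms unfolding iso_by_def by blast+

lemma wd: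
  assumes "plane_poset P" "plane_poset P'" "plane_poset Q" "plane_poset Q'"
    "card (pcar P) = card (pcar Q)" "pp_iso P P'" "pp_iso Q Q'" "pp_le P Q"
  shows "pp_le P' Q'"
proof -
  obtain f where f: "iso_by f P P'" using assms(6) pp_iso_by by blast
  obtain g where g: "iso_by g Q Q'" using assms(7) pp_iso_by by blast
  have c1: "card (pcar P) = card (pcar P')" by (rule iso_card[OF assms(6)])
  have c2: "card (pcar Q) = card (pcar Q')" by (rule iso_card[OF assms(7)])
  have c': "card (pcar P') = card (pcar Q')" using c1 c2 assms(5) by simp
  note mP = theta_mb[OF assms(1,3,5)] and mP' = theta_mb[OF assms(2,4) c']
  have eq: "theta P' Q' (f x) = g (theta P Q x)" if x: "x \<in> pcar P" for x
  proof -
    have m1: "mono_bij (pcar P) (ptot P) (pcar Q') (ptot Q') (theta P' Q' \<circ> f)"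
      by (rule mb_comp[OF iso_mb[OF f] mP'])
    have m2: "mono_bij (pcar P) (ptot P) (pcar Q') (ptot Q') (g \<circ> theta P Q)"
      by (rule mb_comp[OF mP iso_mb[OF g]])
    have "(theta P' Q' \<circ> f) x = (g \<circ> theta P Q) x"
      by (rule mono_bij_unique[OF ptot_lin[OF assms(1)] ptot_lin[OF assms(4)] m1 m2 x])
    then show ?thesis by simp
  qed
  show ?thesis unfolding pp_le_def
  proof (intro ballI impI)
    fix x' y' assume x': "x' \<in> pcar P'" and y': "y' \<in> pcar P'"
      and h: "(theta P' Q' x', theta P' Q' y') \<in> ph Q'"
    have im: "f ` pcar P = pcar P'" using iso_byD(1)[OF f] by (simp add: bij_betw_def)
    obtain x where x: "x \<in> pcar P" "x' = f x" using x' im by blast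
    obtain y where y: "y \<in> pcar P" "y' = f y" using y' im by blast
    have "(g (theta P Q x), g (theta P Q y)) \<in> ph Q'" using h x y eq by simp
    moreover have "theta P Q x \<in> pcar Q" "theta P Q y \<in> pcar Q" using mb_in[OF mP] x y by auto
    ultimately have "(theta P Q x, theta P Q y) \<in> ph Q" using iso_byD(2)[OF g] by blast
    then have "(x,y) \<in> ph P" using assms(8) x y unfolding pp_le_def by blast
    then show "(x', y') \<in> ph P'" using iso_byD(2)[OF f x(1) y(1)] x y by simp
  qed
qed

lemma pr_transfer:
  assumes "plane_poset P" "plane_poset Q" "x \<in> pcar P" "y \<in> pcar P" "u \<in> pcar Q" "v \<in> pcar Q"
    "u = v \<longleftrightarrow> x = y" "(x,y) \<in> pr P" "(u,v) \<in> ptot Q" "(u,v) \<in> ph Q \<Longrightarrow> (x,y) \<in> ph P"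
  shows "(u,v) \<in> pr Q"
proof (cases "x = y")
  case True then show ?thesis using assms plane_facts(5)[OF assms(2)] by simp
next
  case False
  show ?thesis
  proof (rule ccontr)
    assume "(u,v) \<notin> pr Q"
    then have "(x,y) \<in> ph P" using assms(9,10) unfolding ptot_def by blast
    then show False using plane_facts(10)[OF assms(1,3,4) False] assms(8) by blast
  qed
qed

lemma antisym_iso:
  assumes "plane_poset P" "plane_poset Q" "card (pcar P) = card (pcar Q)"
    "pp_le P Q" "pp_le Q P"
  shows "pp_iso P Q"
proof -
  let ?t = "theta P Q" and ?s = "theta Q P"
  note m1 = theta_mb[OF assms(1,2,3)] and m2 = theta_mb[OF assms(2,1) assms(3)[symmetric]]
  have st: "?s (?t x) = x" if "x \<in> pcar P" for x
    using mono_bij_unique[OF ptot_lin[OF assms(1)] ptot_lin[OF assms(1)] mb_comp[OF m1 m2] mb_id that] by simp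
  have inP: "?t x \<in> pcar Q" if "x \<in> pcar P" for x using mb_in[OF m1 that] .
  have bt: "bij_betw ?t (pcar P) (pcar Q)" using m1 mono_bij_def by blast
  have mt: "(x,y) \<in> ptot P \<Longrightarrow> x \<in> pcar P \<Longrightarrow> y \<in> pcar P \<Longrightarrow> (?t x, ?t y) \<in> ptot Q" for x y
    using m1 unfolding mono_bij_def by blast
  have ms: "(u,v) \<in> ptot Q \<Longrightarrow> u \<in> pcar Q \<Longrightarrow> v \<in> pcar Q \<Longrightarrow> (?s u, ?s v) \<in> ptot P" for u v
    using m2 unfolding mono_bij_def by blast
  have hh: "(x,y) \<in> ph P \<longleftrightarrow> (?t x, ?t y) \<in> ph Q" if x: "x \<in> pcar P" and y: "y \<in> pcar P" for x y
  proof
    assume "(x,y) \<in> ph P"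
    then have "(?s (?t x), ?s (?t y)) \<in> ph P" using st x y by simp
    then show "(?t x, ?t y) \<in> ph Q" using assms(5) inP x y unfolding pp_le_def by blast
  next
    assume "(?t x, ?t y) \<in> ph Q"
    then show "(x,y) \<in> ph P" using assms(4) x y unfolding pp_le_def by blast
  qed
  have injt: "?t x = ?t y \<longleftrightarrow> x = y" if "x \<in> pcar P" "y \<in> pcar P" for x y
    using bt that unfolding bij_betw_def inj_on_def by blast
  have rr: "(x,y) \<in> pr P \<longleftrightarrow> (?t x, ?t y) \<in> pr Q" if x: "x \<in> pcar P" and y: "y \<in> pcar P" for x y
  proof
    assume r: "(x,y) \<in> pr P"
    show "(?t x, ?t y) \<in> pr Q"
    proof (rule pr_transfer[OF assms(1,2) x y inP[OF x] inP[OF y] injt[OF x y] r])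
      show "(?t x, ?t y) \<in> ptot Q" using mt r x y unfolding ptot_def by blast
      show "(?t x, ?t y) \<in> ph Q \<Longrightarrow> (x, y) \<in> ph P" using hh x y by blast
    qed
  next
    assume r: "(?t x, ?t y) \<in> pr Q"
    have "(?s (?t x), ?s (?t y)) \<in> pr P"
    proof (rule pr_transfer[OF assms(2,1) inP[OF x] inP[OF y]])
      show "?s (?t x) \<in> pcar P" "?s (?t y) \<in> pcar P" using st x y by auto
      show "(?s (?t x) = ?s (?t y)) = (?t x = ?t y)" using st x y injt[OF x y] by simp
      show "(?t x, ?t y) \<in> pr Q" by (rule r)
      show "(?s (?t x), ?s (?t y)) \<in> ptot P" using ms r inP x y unfolding ptot_def by blast
      show "(?s (?t x), ?s (?t y)) \<in> ph P \<Longrightarrow> (?t x, ?t y) \<in> ph Q" using hh x y st by simp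
    qed
    then show "(x,y) \<in> pr P" using st x y by simp
  qed
  have "iso_by ?t P Q" unfolding iso_by_def using bt hh rr by blast
  then show ?thesis using pp_iso_by by blast
qed

lemma le_refl:
  assumes "plane_poset P" shows "pp_le P P"
proof -
  have "theta P P x = x" if "x \<in> pcar P" for x
    using theta_eq[OF assms assms refl mb_id that] by simp
  then show ?thesis unfolding pp_le_def by auto
qed

lemma le_trans:
  assumes "plane_poset P" "plane_poset Q" "plane_poset R"
    "card (pcar P) = card (pcar Q)" "card (pcar Q) = card (pcar R)"
    "pp_le P Q" "pp_le Q R"
  shows "pp_le P R"
proof -
  note m1 = theta_mb[OF assms(1,2,4)] and m2 = theta_mb[OF assms(2,3,5)]
  have eq: "theta P R x = theta Q R (theta P Q x)" if "x \<in> pcar P" for x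
    using theta_eq[OF assms(1,3) _ mb_comp[OF m1 m2] that] assms(4,5) by simp
  show ?thesis unfolding pp_le_def
  proof (intro ballI impI)
    fix x y assume x: "x \<in> pcar P" and y: "y \<in> pcar P" and h: "(theta P R x, theta P R y) \<in> ph R"
    then have "(theta Q R (theta P Q x), theta Q R (theta P Q y)) \<in> ph R" using eq by simp
    then have "(theta P Q x, theta P Q y) \<in> ph Q" using assms(7) mb_in[OF m1] x y unfolding pp_le_def by blast
    then show "(x, y) \<in> ph P" using assms(6) x y unfolding pp_le_def by blast
  qed
qed

lemma part1:
  assumes "C \<in> PP n" "D \<in> PP n" "P \<in> C" "P' \<in> C" "Q \<in> D" "Q' \<in> D" "pp_le P Q"
  shows "pp_le P' Q'"
proof -
  have i1: "pp_iso P P'" using PP_mem[OF assms(1,3)] assms(4) unfolding cls_def by blast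
  have i2: "pp_iso Q Q'" using PP_mem[OF assms(2,5)] assms(6) unfolding cls_def by blast
  show ?thesis using wd[OF PP_mem(1)[OF assms(1,3)] PP_mem(1)[OF assms(1,4)]
      PP_mem(1)[OF assms(2,5)] PP_mem(1)[OF assms(2,6)] _ i1 i2 assms(7)]
    PP_mem(2)[OF assms(1,3)] PP_mem(2)[OF assms(2,5)] by simp
qed

theorem proposition10:
  fixes n :: nat
  assumes "n \<ge> 1"
  shows "(\<forall>C\<in>PP n. \<forall>D\<in>PP n. \<forall>P\<in>C. \<forall>P'\<in>C. \<forall>Q\<in>D. \<forall>Q'\<in>D.
            pp_le P Q \<longleftrightarrow> pp_le P' Q')
         \<and> partial_order_on (PP n) (PP_le n)"
proof
  show W: "\<forall>C\<in>PP n. \<forall>D\<in>PP n. \<forall>P\<in>C. \<forall>P'\<in>C. \<forall>Q\<in>D. \<forall>Q'\<in>D. pp_le P Q \<longleftrightarrow> pp_le P' Q'"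
    using part1 by blast
  have sub: "PP_le n \<subseteq> PP n \<times> PP n" unfolding PP_le_def by auto
  have rf: "(C,C) \<in> PP_le n" if C: "C \<in> PP n" for C
  proof -
    obtain P where P: "P \<in> C" using PP_ne[OF C] by blast
    then show ?thesis using le_refl[OF PP_mem(1)[OF C P]] C unfolding PP_le_def by blast
  qed
  have tr: "(C,E) \<in> PP_le n" if h12: "(C,D) \<in> PP_le n" "(D,E) \<in> PP_le n" for C D E
  proof -
    obtain P Q where PQ: "C \<in> PP n" "D \<in> PP n" "P \<in> C" "Q \<in> D" "pp_le P Q"
      using h12(1) unfolding PP_le_def by blast
    obtain Q' R where QR: "E \<in> PP n" "Q' \<in> D" "R \<in> E" "pp_le Q' R"
      using h12(2) unfolding PP_le_def by blast
    have "pp_le Q R" using part1[OF PQ(2) QR(1) QR(2) PQ(4) QR(3) QR(3) QR(4)] .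
    then have "pp_le P R"
      using le_trans[OF PP_mem(1)[OF PQ(1,3)] PP_mem(1)[OF PQ(2,4)] PP_mem(1)[OF QR(1,3)] _ _ PQ(5)]
        PP_mem(2)[OF PQ(1,3)] PP_mem(2)[OF PQ(2,4)] PP_mem(2)[OF QR(1,3)] by simp
    then show ?thesis using PQ QR unfolding PP_le_def by blast
  qed
  have an: "C = D" if h12: "(C,D) \<in> PP_le n" "(D,C) \<in> PP_le n" for C D
  proof -
    obtain P Q where PQ: "C \<in> PP n" "D \<in> PP n" "P \<in> C" "Q \<in> D" "pp_le P Q"
      using h12(1) unfolding PP_le_def by blast
    obtain Q' P' where QP: "Q' \<in> D" "P' \<in> C" "pp_le Q' P'"
      using h12(2) unfolding PP_le_def by blast
    have "pp_le Q P" using part1[OF PQ(2) PQ(1) QP(1) PQ(4) QP(2) PQ(3) QP(3)] .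
    then have "pp_iso P Q"
      using antisym_iso[OF PP_mem(1)[OF PQ(1,3)] PP_mem(1)[OF PQ(2,4)] _ PQ(5)]
        PP_mem(2)[OF PQ(1,3)] PP_mem(2)[OF PQ(2,4)] by simp
    then show ?thesis using cls_eq PP_mem(3)[OF PQ(1,3)] PP_mem(3)[OF PQ(2,4)] by simp
  qed
  show "partial_order_on (PP n) (PP_le n)"
    unfolding partial_order_on_def preorder_on_def refl_on_def trans_on_def antisym_on_def
    using sub rf tr an by blast
qed

end
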